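(* Let $a,d\in\mathbb C$ with $a\notin\mathbb Z$ and $d\notin\{0,-1,-2,\dots\}$. Then, as an identity of formal power series in $x,y$, $${}_1F_1(a;d;x)\,{}_0F_1(1-a;y)=\mathrm H_5(a;d;x,-y)+\sum_{k=1}^\infty\sum_{l=1}^k\frac{(-1)^{k-l}(k-1)!}{(l-1)!\,l!\,(k-l)!}\,\frac{1}{(1-a)_k(1-a)_{k-l}(d)_l}\,x^ly^k\,\mathrm H_5(a-k+l;d+l;x,-y).$$
   Context: Pochhammer symbol: $(\lambda)_k=\Gamma(\lambda+k)/\Gamma(\lambda)$ for every integer $k$ (possibly negative) whenever defined; $(\lambda)_0=1$. ${}_1F_1(a;c;x)=\sum_{k\ge0}\frac{(a)_k}{(c)_k k!}x^k$, ${}_0F_1(c;x)=\sum_{k\ge0}\frac{x^k}{(c)_k k!}$. Confluent Horn function $\mathrm H_5(a;d;x,y)=\sum_{p,q\ge0}\frac{(a)_{p-q}}{(d)_p\,p!\,q!}x^py^q$. All functions are regarded as formal power series in $x,y$; the infinite double sum converges in the formal (degree) topology. *)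

theory Defs
  imports Complex_Main "HOL-Computational_Algebra.Formal_Power_Series"
begin

text \<open>Pochhammer symbol with an integer index:
  (lambda)_k = Gamma(lambda+k)/Gamma(lambda); for k = -n < 0 this is
  1 / ((lambda-n)(lambda-n+1)...(lambda-1)).\<close>
definition poch_int :: "complex \<Rightarrow> int \<Rightarrow> complex" where
  "poch_int lam k = (if 0 \<le> k then pochhammer lam (nat k)
                     else 1 / pochhammer (lam + of_int k) (nat (- k)))"

definition hyp1F1 :: "complex \<Rightarrow> complex \<Rightarrow> complex fps" where
  "hyp1F1 a c = Abs_fps (\<lambda>k. pochhammer a k / (pochhammer c k * fact k))"

definition hyp0F1 :: "complex \<Rightarrow> complex fps" where
  "hyp0F1 c = Abs_fps (\<lambda>k. 1 / (pochhammer c k * fact k))"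

text \<open>Formal power series in two variables x, y, represented by their
  coefficient function: F p q is the coefficient of x^p y^q.\<close>
type_synonym bfps = "nat \<Rightarrow> nat \<Rightarrow> complex"

definition in_x :: "complex fps \<Rightarrow> bfps" where
  "in_x f p q = (if q = 0 then fps_nth f p else 0)"

definition in_y :: "complex fps \<Rightarrow> bfps" where
  "in_y f p q = (if p = 0 then fps_nth f q else 0)"

definition bmult :: "bfps \<Rightarrow> bfps \<Rightarrow> bfps" where
  "bmult f g p q = (\<Sum>i\<le>p. \<Sum>j\<le>q. f i j * g (p - i) (q - j))"

definition bmonom :: "complex \<Rightarrow> nat \<Rightarrow> nat \<Rightarrow> bfps" where
  "bmonom c l k p q = (if p = l \<and> q = k then c else 0)"

definition neg_y :: "bfps \<Rightarrow> bfps" where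
  "neg_y f p q = (-1) ^ q * f p q"

definition H5 :: "complex \<Rightarrow> complex \<Rightarrow> bfps" where
  "H5 a d p q = poch_int a (int p - int q) / (pochhammer d p * fact p * fact q)"

text \<open>Convergence of an infinite sum of bivariate series in the formal
  (total degree) topology: for every N, eventually the partial sums agree
  with S on all coefficients of total degree < N.\<close>
definition bsums :: "(nat \<Rightarrow> bfps) \<Rightarrow> bfps \<Rightarrow> bool" where
  "bsums F S \<longleftrightarrow> (\<forall>N. \<forall>\<^sub>F n in sequentially.
       \<forall>p q. p + q < N \<longrightarrow> (\<Sum>k<n. F k p q) = S p q)"

end

theory Submission
  imports Defs "HOL-Analysis.Analysis"
begin


lemma rising_vandermonde:
  fixes x y :: complex
  shows "pochhammer (x + y) n = (\<Sum>k\<le>n. of_nat (n choose k) * pochhammer x k * pochhammer y (n - k))"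
proof -
  have V: "(\<Sum>k=0..n. ((-x) gchoose k) * ((-y) gchoose (n - k))) = (-x + -y) gchoose n"
    by (rule gbinomial_Vandermonde)
  have L: "((-x) gchoose k) * ((-y) gchoose (n - k)) = (-1)^n * (of_nat (n choose k) * pochhammer x k * pochhammer y (n - k)) / fact n" if "k \<le> n" for k
  proof -
    have "(-1::complex)^k * (-1)^(n-k) = (-1)^n" using that by (simp flip: power_add)
    moreover have "(of_nat (n choose k)::complex) = fact n / (fact k * fact (n-k))" using that by (rule binomial_fact)
    ultimately show ?thesis
      by (simp add: gbinomial_pochhammer field_simps)
  qed
  have "(-x + -y) gchoose n = (-1)^n * pochhammer (x+y) n / fact n"
    by (simp add: gbinomial_pochhammer add.commute)
  with V L have "(-1)^n * pochhammer (x+y) n / fact n = (\<Sum>k=0..n. (-1)^n * (of_nat (n choose k) * pochhammer x k * pochhammer y (n - k)) / fact n)"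
    by (metis (no_types, lifting) atLeastAtMost_iff sum.cong)
  also have "\<dots> = (-1)^n * (\<Sum>k=0..n. (of_nat (n choose k) * pochhammer x k * pochhammer y (n - k))) / fact n"
    by (simp add: sum_divide_distrib sum_distrib_left)
  finally show ?thesis by (simp add: atMost_atLeast0)
qed



lemma notInts_add: "(b::complex) \<notin> \<int> \<Longrightarrow> b + of_int z \<notin> \<int>"
  by (metis Ints_diff Ints_of_int add_diff_cancel_right')

lemma notInts_nonpos: "(b::complex) \<notin> \<int> \<Longrightarrow> b \<notin> \<int>\<^sub>\<le>\<^sub>0"
  using nonpos_Ints_subset_Ints by blast

lemma poch_int_Gamma:
  assumes "b \<notin> \<int>"
  shows "poch_int b z = Gamma (b + of_int z) / Gamma b"
proof (cases "0 \<le> z")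
  case True
  then show ?thesis using pochhammer_Gamma[OF notInts_nonpos[OF assms], of "nat z"]
    by (simp add: poch_int_def)
next
  case False
  have nz: "b + of_int z \<notin> \<int>\<^sub>\<le>\<^sub>0" using notInts_nonpos[OF notInts_add[OF assms]] .
  have "pochhammer (b + of_int z) (nat (-z)) = Gamma (b + of_int z + of_nat (nat (-z))) / Gamma (b + of_int z)"
    using pochhammer_Gamma[OF nz] .
  also have "b + of_int z + of_nat (nat (-z)) = b" using False by simp
  finally show ?thesis using False Gamma_nonzero[OF nz] Gamma_nonzero[OF notInts_nonpos[OF assms]]
    by (simp add: poch_int_def)
qed

lemma poch_int_add:
  assumes "b \<notin> \<int>"
  shows "poch_int b (w + z) = poch_int b w * poch_int (b + of_int w) z"
  using Gamma_nonzero[OF notInts_nonpos[OF notInts_add[OF assms, of w]]]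
  by (simp add: poch_int_Gamma[OF assms] poch_int_Gamma[OF notInts_add[OF assms]] add.assoc)

lemma poch_int_nat: "poch_int b (int m) = pochhammer b m"
  by (simp add: poch_int_def)

lemma poch_minus_nat: "pochhammer ((a::complex) - of_nat m) m = (-1)^m * pochhammer (1 - a) m"
  using pochhammer_minus'[of "a - 1" m] by simp



lemma sum_ifmult: "finite S \<Longrightarrow> (\<Sum>j\<in>S. (if j = k then c else 0) * (f j::complex)) = (if k \<in> S then c * f k else 0)"
  by (induct rule: finite_induct) auto

lemma sum_ifmult2: "finite S \<Longrightarrow> (\<Sum>j\<in>S. (f j::complex) * (if j = k then c else 0)) = (if k \<in> S then f k * c else 0)"
  by (induct rule: finite_induct) auto

lemma bmult_bmonom:
  "bmult (bmonom c l k) G p q = (if l \<le> p \<and> k \<le> q then c * G (p-l) (q-k) else 0)"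
proof -
  have eq: "\<And>i j. bmonom c l k i j * G (p-i) (q-j) = (if j = k then (if i = l then c * G (p - l) (q - k) else 0) else 0)"
    by (simp add: bmonom_def)
  have "bmult (bmonom c l k) G p q = (\<Sum>i\<le>p. \<Sum>j\<le>q. (if j = k then (if i = l then c * G (p - l) (q - k) else 0) else 0))"
    by (simp only: bmult_def eq)
  also have "\<dots> = (\<Sum>i\<le>p. (if k \<in> {..q} then (if i = l then c * G (p - l) (q - k) else 0) else 0))"
    by (simp only: sum.delta finite_atMost)
  also have "\<dots> = (if l \<le> p \<and> k \<le> q then c * G (p-l) (q-k) else 0)"
    by (cases "k \<le> q") (simp_all only: sum.delta finite_atMost atMost_iff sum.neutral_const, auto)
  finally show ?thesis .
qed

lemma bmult_inxy: "bmult (in_x f) (in_y g) p q = fps_nth f p * fps_nth g q"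
proof -
  have eq: "\<And>i j. i \<le> p \<Longrightarrow> in_x f i j * in_y g (p-i) (q-j) = (if j = 0 then (if i = p then fps_nth f p * fps_nth g q else 0) else 0)"
    by (auto simp add: in_x_def in_y_def)
  have "bmult (in_x f) (in_y g) p q = (\<Sum>i\<le>p. \<Sum>j\<le>q. (if j = 0 then (if i = p then fps_nth f p * fps_nth g q else 0) else 0))"
    unfolding bmult_def by (intro sum.cong refl, rule eq, simp)
  also have "\<dots> = (\<Sum>i\<le>p. (if 0 \<in> {..q} then (if i = p then fps_nth f p * fps_nth g q else 0) else 0))"
    by (simp only: sum.delta finite_atMost)
  also have "\<dots> = fps_nth f p * fps_nth g q"
    by (simp only: sum.delta finite_atMost atMost_iff, simp)
  finally show ?thesis .
qed

lemma binsum: "k \<ge> 1 \<Longrightarrow> (\<Sum>l\<in>{1..k}. (k - 1 choose (l - 1)) * (p choose l)) = (p + (k - 1)) choose k"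
proof -
  assume k: "k \<ge> 1"
  have "(p + (k - 1)) choose k = (\<Sum>j\<le>k. (p choose j) * ((k-1) choose (k - j)))"
    by (rule vandermonde[symmetric])
  also have "\<dots> = (\<Sum>j\<in>{1..k}. (p choose j) * ((k-1) choose (k - j)))"
    using k by (intro sum.mono_neutral_right) auto
  also have "\<dots> = (\<Sum>l\<in>{1..k}. (k - 1 choose (l - 1)) * (p choose l))"
  proof (intro sum.cong refl)
    fix j assume "j \<in> {1..k}"
    then have "(k-1) choose (k-j) = (k-1) choose (j-1)"
    proof -
      have e: "k - 1 - (j - 1) = k - j" using \<open>j \<in> {1..k}\<close> by auto
      have "j - 1 \<le> k - 1" using \<open>j \<in> {1..k}\<close> by auto
      from binomial_symmetric[OF this] e show ?thesis by simp
    qed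
    then show "(p choose j) * ((k-1) choose (k - j)) = (k - 1 choose (j - 1)) * (p choose j)" by simp
  qed
  finally show ?thesis by simp
qed

lemma choose_poch: "of_nat ((p + k - 1) choose k) * fact k = pochhammer (of_nat p :: complex) k"
proof (cases "k = 0")
  case True then show ?thesis by simp
next
  case False
  show ?thesis
  proof (cases "p = 0")
    case True
    then show ?thesis using False by (cases k) (auto simp: pochhammer_rec)
  next
    case pne: False
    have "(of_nat ((p + k - 1) choose k) :: complex) = of_nat (p + k - 1) gchoose k" by (rule binomial_gbinomial)
    also have "\<dots> = pochhammer (of_nat (p + k - 1) - of_nat k + 1) k / fact k" by (rule gbinomial_pochhammer')
    also have "of_nat (p + k - 1) - of_nat k + 1 = (of_nat p :: complex)" using pne by (simp add: of_nat_diff)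
    finally show ?thesis by simp
  qed
qed



lemma poch1a_nz: "(a::complex) \<notin> \<int> \<Longrightarrow> pochhammer (1 - a) j \<noteq> 0"
proof
  assume "a \<notin> \<int>" "pochhammer (1 - a) j = 0"
  then obtain i where "1 - a = - of_nat i" by (auto simp: pochhammer_eq_0_iff)
  then have "a = of_int (int i + 1)" by (simp add: algebra_simps)
  with \<open>a \<notin> \<int>\<close> show False by (metis Ints_of_int)
qed

lemma pochd_nz: "\<forall>n::nat. d \<noteq> - of_nat n \<Longrightarrow> pochhammer (d::complex) j \<noteq> 0"
  by (auto simp: pochhammer_eq_0_iff)

lemma summand:
  fixes a d :: complex
  assumes a: "a \<notin> \<int>" and d: "\<forall>n::nat. d \<noteq> - of_nat n"
    and l: "1 \<le> l" "l \<le> k" and kq: "k \<le> q"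
  shows "bmult (bmonom ((-1) ^ (k - l) * fact (k - 1)
                              / (fact (l - 1) * fact l * fact (k - l))
                            * (1 / (pochhammer (1 - a) k * pochhammer (1 - a) (k - l)
                                    * pochhammer d l))) l k)
                   (neg_y (H5 (a - of_nat k + of_nat l) (d + of_nat l))) p q
   = of_nat (((k-1) choose (l-1)) * (p choose l)) *
     ((-1)^(q-k) * poch_int a (int p - int q) / (pochhammer (1-a) k * pochhammer d p * fact p * fact (q-k)))"
proof (cases "l \<le> p")
  case False
  then show ?thesis by (simp add: bmult_bmonom)
next
  case True
  define m where "m = k - l"
  define s where "s = int p - int q"
  define As where "As = poch_int a s"
  have b: "a - of_nat k + of_nat l = a - of_nat m" using l by (simp add: m_def of_nat_diff)
  have bZ: "a - of_nat m \<notin> \<int>" using notInts_add[OF a, of "- int m"] by simp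
  have e: "int (p - l) - int (q - k) = int m + s" using l kq True by (simp add: m_def s_def)
  have P1: "poch_int (a - of_nat m) (int m + s) = pochhammer (a - of_nat m) m * As"
    using poch_int_add[OF bZ, of "int m" s] by (simp add: poch_int_nat As_def)
  have P2: "pochhammer (a - of_nat m) m = (-1)^m * pochhammer (1 - a) m" by (rule poch_minus_nat)
  have P4: "pochhammer d p = pochhammer d l * pochhammer (d + of_nat l) (p - l)"
    using pochhammer_product[OF True] .
  have C1: "(of_nat (p choose l)::complex) = fact p / (fact l * fact (p - l))" using True by (rule binomial_fact)
  have C2: "(of_nat ((k-1) choose (l-1))::complex) = fact (k-1) / (fact (l-1) * fact m)"
    using binomial_fact[of "l-1" "k-1", where 'a=complex] l by (simp add: m_def)
  have km: "k - l = m" by (simp add: m_def)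
  have sg: "((-1::complex)^m) * (-1)^m = 1" by (simp flip: power_add add: power_even_eq[symmetric] mult_2[symmetric])
  have nz: "pochhammer (1 - a) k \<noteq> 0" "pochhammer (1 - a) m \<noteq> 0" "pochhammer d l \<noteq> 0"
     "pochhammer (d + of_nat l) (p - l) \<noteq> 0"
    using poch1a_nz[OF a] pochd_nz[OF d] P4 by auto
  have H: "neg_y (H5 (a - of_nat k + of_nat l) (d + of_nat l)) (p-l) (q-k) = (-1)^(q-k) * ((-1)^m * pochhammer (1-a) m * As) / (pochhammer (d + of_nat l) (p-l) * fact (p-l) * fact (q-k))"
    by (simp only: neg_y_def H5_def b e P1 P2 times_divide_eq_right)
  have L: "bmult (bmonom ((-1) ^ (k - l) * fact (k - 1)
                              / (fact (l - 1) * fact l * fact (k - l))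
                            * (1 / (pochhammer (1 - a) k * pochhammer (1 - a) (k - l)
                                    * pochhammer d l))) l k)
                   (neg_y (H5 (a - of_nat k + of_nat l) (d + of_nat l))) p q
     = ((-1) ^ m * fact (k - 1)
                              / (fact (l - 1) * fact l * fact m)
                            * (1 / (pochhammer (1 - a) k * pochhammer (1 - a) m
                                    * pochhammer d l))) * ((-1)^(q-k) * ((-1)^m * pochhammer (1-a) m * As) / (pochhammer (d + of_nat l) (p-l) * fact (p-l) * fact (q-k)))"
    using True kq by (subst bmult_bmonom) (simp only: H km if_True simp_thms)
  have R: "(of_nat (((k-1) choose (l-1)) * (p choose l)) :: complex) = fact (k-1) / (fact (l-1) * fact m) * (fact p / (fact l * fact (p - l)))"
    by (simp only: of_nat_mult C1 C2)
  show ?thesis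
    unfolding L R P4 As_def[symmetric] s_def[symmetric]
    using nz sg by (simp add: field_simps)
qed


lemma Vq:
  fixes a :: complex
  assumes a: "a \<notin> \<int>"
  shows "(\<Sum>k\<le>q. of_nat ((p + k - 1) choose k) * (-1)^(q-k) / (pochhammer (1-a) k * fact (q-k)))
           * (fact q * pochhammer (1-a) q) = pochhammer (a + of_int (int p - int q)) q"
proof -
  have "pochhammer (a + of_int (int p - int q)) q = pochhammer (of_nat p + (a - of_nat q)) q"
    by (simp add: algebra_simps)
  also have "\<dots> = (\<Sum>k\<le>q. of_nat (q choose k) * pochhammer (of_nat p) k * pochhammer (a - of_nat q) (q - k))"
    by (rule rising_vandermonde)
  also have "\<dots> = (\<Sum>k\<le>q. of_nat ((p + k - 1) choose k) * (-1)^(q-k) / (pochhammer (1-a) k * fact (q-k)) * (fact q * pochhammer (1-a) q))"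
  proof (intro sum.cong refl)
    fix k assume "k \<in> {..q}"
    then have kq: "k \<le> q" by simp
    have e1: "a - of_nat q = (a - of_nat k) - of_nat (q - k)" using kq by (simp add: of_nat_diff)
    have P1: "pochhammer (a - of_nat q) (q - k) = (-1)^(q-k) * pochhammer (1 - a + of_nat k) (q-k)"
      unfolding e1 poch_minus_nat by (simp add: algebra_simps)
    have P2: "pochhammer (1-a) q = pochhammer (1-a) k * pochhammer (1 - a + of_nat k) (q-k)"
      using pochhammer_product[OF kq] .
    have C: "(of_nat (q choose k)::complex) = fact q / (fact k * fact (q - k))" using kq by (rule binomial_fact)
    have Pp: "pochhammer (of_nat p :: complex) k = of_nat ((p + k - 1) choose k) * fact k" by (rule choose_poch[symmetric])
    have nz: "pochhammer (1-a) k \<noteq> 0" using poch1a_nz[OF a] .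
    show "of_nat (q choose k) * pochhammer (of_nat p) k * pochhammer (a - of_nat q) (q - k) =
          of_nat ((p + k - 1) choose k) * (-1)^(q-k) / (pochhammer (1-a) k * fact (q-k)) * (fact q * pochhammer (1-a) q)"
      unfolding C Pp P1 P2 using nz by (simp add: field_simps)
  qed
  also have "\<dots> = (\<Sum>k\<le>q. of_nat ((p + k - 1) choose k) * (-1)^(q-k) / (pochhammer (1-a) k * fact (q-k))) * (fact q * pochhammer (1-a) q)"
    by (rule sum_distrib_right[symmetric])
  finally show ?thesis by simp
qed



definition Fterm :: "complex \<Rightarrow> complex \<Rightarrow> nat \<Rightarrow> bfps" where
  "Fterm a d k = (if k = 0 then neg_y (H5 a d)
          else (\<lambda>p q. \<Sum>l\<in>{1..k}.
             bmult (bmonom ((-1) ^ (k - l) * fact (k - 1)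
                              / (fact (l - 1) * fact l * fact (k - l))
                            * (1 / (pochhammer (1 - a) k * pochhammer (1 - a) (k - l)
                                    * pochhammer d l))) l k)
                   (neg_y (H5 (a - of_nat k + of_nat l) (d + of_nat l))) p q))"

lemma Fterm_big: "q < k \<Longrightarrow> Fterm a d k p q = 0"
  by (simp add: Fterm_def bmult_bmonom)

lemma Fterm_val:
  fixes a d :: complex
  assumes a: "a \<notin> \<int>" and d: "\<forall>n::nat. d \<noteq> - of_nat n" and kq: "k \<le> q"
  shows "Fterm a d k p q = of_nat ((p + k - 1) choose k) * (-1)^(q-k) / (pochhammer (1-a) k * fact (q-k))
           * (poch_int a (int p - int q) / (pochhammer d p * fact p))"
proof (cases "k = 0")
  case True
  then show ?thesis by (simp add: Fterm_def neg_y_def H5_def)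
next
  case False
  then have k1: "1 \<le> k" by simp
  have "Fterm a d k p q = (\<Sum>l\<in>{1..k}. of_nat (((k-1) choose (l-1)) * (p choose l)) *
     ((-1)^(q-k) * poch_int a (int p - int q) / (pochhammer (1-a) k * pochhammer d p * fact p * fact (q-k))))"
    unfolding Fterm_def using False
    by (simp only: if_False) (intro sum.cong refl summand[OF a d _ _ kq], auto)
  also have "\<dots> = of_nat (\<Sum>l\<in>{1..k}. ((k-1) choose (l-1)) * (p choose l)) *
     ((-1)^(q-k) * poch_int a (int p - int q) / (pochhammer (1-a) k * pochhammer d p * fact p * fact (q-k)))"
    by (simp only: of_nat_sum sum_distrib_right)
  also have "(\<Sum>l\<in>{1..k}. ((k-1) choose (l-1)) * (p choose l)) = (p + k - 1) choose k"
    using binsum[OF k1, of p] k1 by simp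
  finally show ?thesis by (simp add: field_simps)
qed

lemma coeff_identity:
  fixes a d :: complex
  assumes a: "a \<notin> \<int>" and d: "\<forall>n::nat. d \<noteq> - of_nat n"
  shows "(\<Sum>k<Suc q. Fterm a d k p q) = bmult (in_x (hyp1F1 a d)) (in_y (hyp0F1 (1 - a))) p q"
proof -
  define As where "As = poch_int a (int p - int q)"
  define Y where "Y k = of_nat ((p + k - 1) choose k) * (-1)^(q-k) / (pochhammer (1-a) k * fact (q-k))" for k
  have "(\<Sum>k<Suc q. Fterm a d k p q) = (\<Sum>k\<le>q. Y k * (As / (pochhammer d p * fact p)))"
    unfolding lessThan_Suc_atMost
    by (intro sum.cong refl) (simp add: Fterm_val[OF a d] Y_def As_def)
  also have "\<dots> = (\<Sum>k\<le>q. Y k) * (As / (pochhammer d p * fact p))"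
    by (rule sum_distrib_right[symmetric])
  finally have L: "(\<Sum>k<Suc q. Fterm a d k p q) = (\<Sum>k\<le>q. Y k) * (As / (pochhammer d p * fact p))" .
  have V: "(\<Sum>k\<le>q. Y k) * (fact q * pochhammer (1-a) q) = pochhammer (a + of_int (int p - int q)) q"
    unfolding Y_def by (rule Vq[OF a])
  have Ap: "pochhammer a p = As * pochhammer (a + of_int (int p - int q)) q"
    using poch_int_add[OF a, of "int p - int q" "int q"] by (simp add: poch_int_nat As_def)
  have nz: "pochhammer (1-a) q \<noteq> 0" "pochhammer d p \<noteq> 0"
    using poch1a_nz[OF a] pochd_nz[OF d] by auto
  have S: "bmult (in_x (hyp1F1 a d)) (in_y (hyp0F1 (1 - a))) p q
      = pochhammer a p / (pochhammer d p * fact p) * (1 / (pochhammer (1-a) q * fact q))"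
    by (simp add: bmult_inxy hyp1F1_def hyp0F1_def)
  show ?thesis
    unfolding L S Ap V[symmetric] using nz by (simp add: field_simps)
qed


theorem mainTheorem11:
  fixes a d :: complex
  assumes "a \<notin> \<int>"
    and "\<forall>n::nat. d \<noteq> - of_nat n"
  shows "bsums
     (\<lambda>k. if k = 0 then neg_y (H5 a d)
          else (\<lambda>p q. \<Sum>l\<in>{1..k}.
             bmult (bmonom ((-1) ^ (k - l) * fact (k - 1)
                              / (fact (l - 1) * fact l * fact (k - l))
                            * (1 / (pochhammer (1 - a) k * pochhammer (1 - a) (k - l)
                                    * pochhammer d l))) l k)
                   (neg_y (H5 (a - of_nat k + of_nat l) (d + of_nat l))) p q))
     (bmult (in_x (hyp1F1 a d)) (in_y (hyp0F1 (1 - a))))"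
proof -
  have eqF: "(\<lambda>k. if k = 0 then neg_y (H5 a d)
          else (\<lambda>p q. \<Sum>l\<in>{1..k}.
             bmult (bmonom ((-1) ^ (k - l) * fact (k - 1)
                              / (fact (l - 1) * fact l * fact (k - l))
                            * (1 / (pochhammer (1 - a) k * pochhammer (1 - a) (k - l)
                                    * pochhammer d l))) l k)
                   (neg_y (H5 (a - of_nat k + of_nat l) (d + of_nat l))) p q)) = Fterm a d"
    by (rule ext) (simp only: Fterm_def)
  show ?thesis
    unfolding eqF bsums_def
  proof (intro allI eventually_sequentiallyI)
    fix N n p q :: nat
    assume nN: "N \<le> n"
    show "p + q < N \<longrightarrow> (\<Sum>k<n. Fterm a d k p q) = bmult (in_x (hyp1F1 a d)) (in_y (hyp0F1 (1 - a))) p q"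
    proof
      assume "p + q < N"
      then have qn: "Suc q \<le> n" using nN by simp
      have "(\<Sum>k<n. Fterm a d k p q) = (\<Sum>k<Suc q. Fterm a d k p q)"
        by (rule sum.mono_neutral_right) (use qn in \<open>auto simp: Fterm_big\<close>)
      also have "\<dots> = bmult (in_x (hyp1F1 a d)) (in_y (hyp0F1 (1 - a))) p q"
        by (rule coeff_identity[OF assms])
      finally show "(\<Sum>k<n. Fterm a d k p q) = bmult (in_x (hyp1F1 a d)) (in_y (hyp0F1 (1 - a))) p q" .
    qed
  qed
qed

end
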